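(* Let $n\ge 2$, $\rho>0$ and $\omega\in S^{n-1}$. Let $P(\tau,\xi) = -\tau^2 + \xi\cdot\xi + i\tau\,\xi\cdot\xi$ for $(\tau,\xi)\in\mathbb{C}\times\mathbb{C}^n$, $\zeta^o = (-i\rho^2, i\rho\omega)$, $P_o(\zeta) = P(\zeta+\zeta^o)$ and $N = (1,0,\ldots,0)\in\mathbb{R}\times\mathbb{R}^n$. Suppose $\sigma(\zeta)$ is a solution of $P_o(\zeta+\sigma N) = 0$, $\zeta = (\tau,\xi)\in\mathbb{C}\times\mathbb{C}^n$, which is analytic and single-valued in a ball $B\subset\mathbb{C}\times\mathbb{C}^n$ with real center and radius $1$. Then $\sup_{\zeta\in B}\operatorname{Im}\sigma(\zeta)\ge 0$. *)

theory Defs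
  imports "HOL-Analysis.Analysis"
begin

text \<open>Points of C x C^n are pairs (tau, xi) with xi :: complex^'n.
  The bilinear (non-conjugated) dot product xi . xi.\<close>
definition cdot :: "complex^'n \<Rightarrow> complex^'n \<Rightarrow> complex" where
  "cdot x y = (\<Sum>i\<in>UNIV. x $ i * y $ i)"

definition Psym :: "complex \<Rightarrow> complex^'n \<Rightarrow> complex" where
  "Psym t x = - (t ^ 2) + cdot x x + \<i> * t * cdot x x"

definition zeta_o :: "real \<Rightarrow> real^'n \<Rightarrow> complex \<times> (complex^'n)" where
  "zeta_o \<rho> \<omega> = (- \<i> * of_real (\<rho>^2), \<chi> j. \<i> * of_real \<rho> * of_real (\<omega> $ j))"

definition P_o :: "real \<Rightarrow> real^'n \<Rightarrow> complex \<times> (complex^'n) \<Rightarrow> complex" where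
  "P_o \<rho> \<omega> z = (let w = z + zeta_o \<rho> \<omega> in Psym (fst w) (snd w))"

definition Nvec :: "complex \<times> (complex^'n)" where
  "Nvec = (1, 0)"

definition cscale :: "complex \<Rightarrow> complex \<times> (complex^'n) \<Rightarrow> complex \<times> (complex^'n)" where
  "cscale c z = (c * fst z, c *s snd z)"

text \<open>Holomorphic (complex analytic) function of several complex variables on an
  open set: complex Frechet differentiable at every point (Osgood/Hartogs:
  equivalent to analyticity on open sets).\<close>
definition holomorphic_several :: "(complex \<times> (complex^'n) \<Rightarrow> complex) \<Rightarrow> (complex \<times> (complex^'n)) set \<Rightarrow> bool" where
  "holomorphic_several f S \<longleftrightarrow>
     (\<forall>z\<in>S. \<exists>L. (f has_derivative L) (at z) \<and> (\<forall>v. L (cscale \<i> v) = \<i> * L v))"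

definition real_point :: "complex \<times> (complex^'n) \<Rightarrow> bool" where
  "real_point z \<longleftrightarrow> Im (fst z) = 0 \<and> (\<forall>j. Im (snd z $ j) = 0)"

end

theory Submission
  imports Defs
begin

lemma key:
  fixes T Q :: complex and r :: real
  assumes eq: "- (T ^ 2) + Q + \<i>  *  T  *  Q = 0" and a: "Re Q \<ge> -r" and r: "r \<ge> 0"
  shows "Im T \<ge> -r - 1"
proof (rule ccontr)
  assume "\<not> ?thesis"
  hence v: "Im T < -r - 1" by simp
  define u where "u = Re T"
  define v where "v = Im T"
  define a where "a = Re Q"
  define b where "b = Im Q"
  have E1: "-(u * u - v * v) + a - u * b - v * a = 0"
    using arg_cong[OF eq, of Re] unfolding u_def v_def a_def b_def by (simp add: power2_eq_square)
  have E2: "-2 * u * v + b + u * a - v * b = 0"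
    using arg_cong[OF eq, of Im] unfolding u_def v_def a_def b_def by (simp add: power2_eq_square algebra_simps)
  have "(-(u * u - v * v) + a - u * b - v * a) * (1-v) + (-2 * u * v + b + u * a - v * b) * u = 0"
    using E1 E2 by simp
  hence id: "a * ((v-1)^2+u^2) = v^2 * (v-1) + u^2 * (v+1)"
    by (simp add: algebra_simps power2_eq_square) 
  have v': "v < -r - 1" using v v_def by simp
  have D: "(v-1)^2+u^2 > 0" using v' r by (smt (verit) zero_less_power2 zero_le_power2)
  have "a * ((v-1)^2+u^2) \<ge> -r * ((v-1)^2+u^2)" using a a_def D using mult_right_mono[of "-r" a "(v-1)^2+u^2"] by simp
  moreover have "-r * ((v-1)^2+u^2) > (v+1) * ((v-1)^2+u^2)" using D v' using mult_strict_right_mono[of "v+1" "-r" "(v-1)^2+u^2"] by simp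
  moreover have "(v+1) * ((v-1)^2+u^2) \<ge> v^2 * (v-1) + u^2 * (v+1)"
    using v' r by (simp add: algebra_simps power2_eq_square)
  ultimately show False using id by linarith
qed

lemma sum_omega:
  fixes \<omega> :: "real^'n"
  assumes "norm \<omega> = 1"
  shows "(\<Sum>j\<in>UNIV. (\<omega> $ j)^2) = 1"
proof -
  have "\<omega> \<bullet> \<omega> = 1" using assms by (simp add: dot_square_norm)
  thus ?thesis by (simp add: inner_vec_def power2_eq_square)
qed

lemma pointwise:
  fixes \<rho> :: real and \<omega> :: "real^'n" and ct :: complex and cx :: "complex^'n"
    and s :: complex and t :: real
  assumes "norm \<omega> = 1" and "\<rho> > 0"
    and ct: "Im ct = 0" and cx: "\<forall>j. Im (cx $ j) = 0"
    and eq: "P_o \<rho> \<omega> ((ct - \<i> * of_real t, cx) + cscale s Nvec) = 0"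
  shows "Im s \<ge> t - 1"
proof -
  define T where "T = ct - \<i> * of_real t + s + (- \<i> * of_real (\<rho>^2))"
  define x where "x = (cx + (\<chi> j. \<i> * of_real \<rho> * of_real (\<omega> $ j)) :: complex^'n)"
  define Q where "Q = cdot x x"
  have e: "- (T ^ 2) + Q + \<i> * T * Q = 0"
    using eq unfolding P_o_def zeta_o_def cscale_def Nvec_def Psym_def T_def Q_def x_def
    by (simp add: Let_def)
  have "Re Q = (\<Sum>j\<in>UNIV. (Re (cx $ j))^2 - \<rho>^2 * (\<omega> $ j)^2)"
    unfolding Q_def cdot_def x_def using cx
    by (simp add: power2_eq_square algebra_simps)
  also have "\<dots> = (\<Sum>j\<in>UNIV. (Re (cx $ j))^2) - \<rho>^2 * (\<Sum>j\<in>UNIV. (\<omega> $ j)^2)"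
    by (simp add: sum_subtractf sum_distrib_left)
  also have "\<dots> \<ge> 0 - \<rho>^2 * 1" using sum_omega[OF assms(1)]
    by (simp add: sum_nonneg)
  finally have "Re Q \<ge> - (\<rho>^2)" by simp
  from key[OF e this] have "Im T \<ge> - (\<rho>^2) - 1" by simp
  thus ?thesis unfolding T_def using ct by simp
qed

theorem lemma1:
  fixes \<rho> :: real and \<omega> :: "real^'n" and c :: "complex \<times> (complex^'n)"
    and \<sigma> :: "complex \<times> (complex^'n) \<Rightarrow> complex"
  assumes "CARD('n) \<ge> 2"
    and "\<rho> > 0"
    and "norm \<omega> = 1"
    and "real_point c"
    and "holomorphic_several \<sigma> (ball c 1)"
    and "\<forall>z\<in>ball c 1. P_o \<rho> \<omega> (z + cscale (\<sigma> z) Nvec) = 0"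
  shows "(SUP z\<in>ball c 1. ereal (Im (\<sigma> z))) \<ge> 0"
proof -
  obtain ct cx where c: "c = (ct, cx)" by (cases c)
  have ct: "Im ct = 0" and cx: "\<forall>j. Im (cx $ j) = 0"
    using assms(4) c unfolding real_point_def by auto
  let ?S = "SUP z\<in>ball c 1. ereal (Im (\<sigma> z))"
  have bnd: "ereal (t - 1) \<le> ?S" if t: "0 \<le> t" "t < 1" for t :: real
  proof -
    define z where "z = (ct - \<i> * of_real t, cx)"
    have "dist c z = t" unfolding z_def c dist_norm using t
      by (simp add: norm_Pair norm_mult)
    hence zb: "z \<in> ball c 1" using t by simp
    have "Im (\<sigma> z) \<ge> t - 1"
      using pointwise[OF assms(3) assms(2) ct cx] assms(6) zb unfolding z_def by blast
    hence "ereal (t - 1) \<le> ereal (Im (\<sigma> z))" by simp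
    also have "\<dots> \<le> ?S" using zb by (rule SUP_upper)
    finally show ?thesis .
  qed
  show ?thesis
  proof (rule ereal_le_epsilon2)
    fix e :: real assume e: "e > 0"
    define t where "t = max 0 (1 - e)"
    have "ereal (t - 1) \<le> ?S" using bnd[of t] e unfolding t_def by auto
    moreover have "-e \<le> t - 1" unfolding t_def by simp
    ultimately have "ereal (-e) \<le> ?S" by (meson ereal_less_eq(3) order_trans)
    thus "0 \<le> ?S + ereal e"
      by (cases ?S) auto
  qed
qed

end
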